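(* Let $G$ be a finite, simple, connected graph of order at least four with $\dim_{wt}(G)=2$, and let $\{u,v\}$ be a weak total metric basis of $G$. Then $u$ and $v$ are not twins in $G$. In fact, $G$ has no twin.
   Context: $d(x,y)$ is the shortest-path distance and $N(x)$ the set of neighbors of $x$. A set $W\subseteq V(G)$ is a resolving set if for every two distinct vertices $y,z$ there is $x\in W$ with $d(y,x)\ne d(z,x)$. A set $W$ is a weak total resolving set (WTR-set) if $W$ is resolving and, for every $w\in W$ and every $x\in V(G)\setminus W$, there is $w'\in W\setminus\{w\}$ with $d(x,w')\ne d(w,w')$. $\dim_{wt}(G)$ is the minimum cardinality of a WTR-set, and a weak total metric basis is a WTR-set of that cardinality. Two distinct vertices $u,v$ are twins if $N(u)\setminus\{v\}=N(v)\setminus\{u\}$; a vertex $u$ is a twin (and $G$ has a twin) if there exists $v\ne u$ such that $u,v$ are twins. *)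

theory Defs
  imports Main
begin

definition simple_graph :: "'a set \<Rightarrow> ('a \<Rightarrow> 'a \<Rightarrow> bool) \<Rightarrow> bool" where
  "simple_graph V E \<longleftrightarrow> finite V \<and> (\<forall>x y. E x y \<longrightarrow> x \<in> V \<and> y \<in> V)
     \<and> (\<forall>x y. E x y \<longrightarrow> E y x) \<and> (\<forall>x. \<not> E x x)"

inductive walk_len :: "('a \<Rightarrow> 'a \<Rightarrow> bool) \<Rightarrow> 'a \<Rightarrow> 'a \<Rightarrow> nat \<Rightarrow> bool" for E where
  walk_nil: "walk_len E x x 0"
| walk_cons: "E x y \<Longrightarrow> walk_len E y z n \<Longrightarrow> walk_len E x z (Suc n)"

definition connected_graph :: "'a set \<Rightarrow> ('a \<Rightarrow> 'a \<Rightarrow> bool) \<Rightarrow> bool" where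
  "connected_graph V E \<longleftrightarrow> (\<forall>x\<in>V. \<forall>y\<in>V. \<exists>n. walk_len E x y n)"

definition dist :: "('a \<Rightarrow> 'a \<Rightarrow> bool) \<Rightarrow> 'a \<Rightarrow> 'a \<Rightarrow> nat" where
  "dist E x y = (LEAST n. walk_len E x y n)"

definition nbhd :: "('a \<Rightarrow> 'a \<Rightarrow> bool) \<Rightarrow> 'a \<Rightarrow> 'a set" where
  "nbhd E x = {y. E x y}"

definition resolving_set :: "'a set \<Rightarrow> ('a \<Rightarrow> 'a \<Rightarrow> bool) \<Rightarrow> 'a set \<Rightarrow> bool" where
  "resolving_set V E W \<longleftrightarrow> W \<subseteq> V \<and>
     (\<forall>y\<in>V. \<forall>z\<in>V. y \<noteq> z \<longrightarrow> (\<exists>x\<in>W. dist E y x \<noteq> dist E z x))"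

definition wtr_set :: "'a set \<Rightarrow> ('a \<Rightarrow> 'a \<Rightarrow> bool) \<Rightarrow> 'a set \<Rightarrow> bool" where
  "wtr_set V E W \<longleftrightarrow> resolving_set V E W \<and>
     (\<forall>w\<in>W. \<forall>x\<in>V - W. \<exists>w'\<in>W - {w}. dist E x w' \<noteq> dist E w w')"

definition dim_wt :: "'a set \<Rightarrow> ('a \<Rightarrow> 'a \<Rightarrow> bool) \<Rightarrow> nat" where
  "dim_wt V E = (LEAST k. \<exists>W. wtr_set V E W \<and> card W = k)"

definition wt_metric_basis :: "'a set \<Rightarrow> ('a \<Rightarrow> 'a \<Rightarrow> bool) \<Rightarrow> 'a set \<Rightarrow> bool" where
  "wt_metric_basis V E W \<longleftrightarrow> wtr_set V E W \<and> card W = dim_wt V E"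

definition twins :: "'a set \<Rightarrow> ('a \<Rightarrow> 'a \<Rightarrow> bool) \<Rightarrow> 'a \<Rightarrow> 'a \<Rightarrow> bool" where
  "twins V E u v \<longleftrightarrow> u \<in> V \<and> v \<in> V \<and> u \<noteq> v \<and> nbhd E u - {v} = nbhd E v - {u}"

definition is_twin :: "'a set \<Rightarrow> ('a \<Rightarrow> 'a \<Rightarrow> bool) \<Rightarrow> 'a \<Rightarrow> bool" where
  "is_twin V E u \<longleftrightarrow> (\<exists>v. twins V E u v)"

end

theory Submission
  imports Defs
begin

lemma walk_snoc: "walk_len E x y n \<Longrightarrow> E y z \<Longrightarrow> walk_len E x z (Suc n)"
  by (induction rule: walk_len.induct) (auto intro: walk_len.intros)

lemma walk_rev: "walk_len E x y n \<Longrightarrow> (\<forall>a b. E a b \<longrightarrow> E b a) \<Longrightarrow> walk_len E y x n"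
  by (induction rule: walk_len.induct) (auto intro: walk_len.intros walk_snoc)

lemma walk0: "walk_len E x y 0 \<Longrightarrow> x = y"
  by (erule walk_len.cases) auto

lemma walk_last:
  assumes s: "\<forall>a b. E a b \<longrightarrow> E b a" and w: "walk_len E x y (Suc n)"
  shows "\<exists>t. walk_len E x t n \<and> E t y"
proof -
  have "walk_len E y x (Suc n)" using walk_rev[OF w s] .
  then obtain t where "E y t" "walk_len E t x n" by (cases rule: walk_len.cases) auto
  moreover have "walk_len E x t n" using walk_rev s calculation by metis
  ultimately show ?thesis using s by blast
qed

lemma walk_closed: "walk_len E x y n \<Longrightarrow> (\<forall>p q. p \<in> S \<longrightarrow> E p q \<longrightarrow> q \<in> S) \<Longrightarrow> x \<in> S \<Longrightarrow> y \<in> S"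
  by (induction rule: walk_len.induct) auto

lemma dist_le: "walk_len E x y n \<Longrightarrow> dist E x y \<le> n"
  unfolding dist_def by (rule Least_le)

lemma dist_walk: "walk_len E x y n \<Longrightarrow> walk_len E x y (dist E x y)"
  unfolding dist_def by (rule LeastI)

lemma dist0: "walk_len E x y n \<Longrightarrow> x \<noteq> y \<Longrightarrow> dist E x y \<noteq> 0"
  using dist_walk walk0 by metis

lemma dist1: "E x y \<Longrightarrow> x \<noteq> y \<Longrightarrow> dist E x y = 1"
proof -
  assume a: "E x y" "x \<noteq> y"
  have w: "walk_len E x y 1" using a by (auto intro: walk_len.intros)
  show ?thesis using dist_le[OF w] dist0[OF w a(2)] by linarith
qed

lemma walk2: "E x a \<Longrightarrow> E a y \<Longrightarrow> walk_len E x y 2"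
  by (auto intro!: walk_len.intros simp: numeral_2_eq_2)

lemma dist_sym:
  assumes s: "\<forall>a b. E a b \<longrightarrow> E b a" and ex: "\<exists>n. walk_len E x y n"
  shows "dist E x y = dist E y x"
proof -
  obtain n where n: "walk_len E x y n" using ex by blast
  have a: "walk_len E x y (dist E x y)" using dist_walk[OF n] .
  have b: "walk_len E y x (dist E y x)" using dist_walk[OF walk_rev[OF n s]] .
  show ?thesis using dist_le[OF walk_rev[OF a s]] dist_le[OF walk_rev[OF b s]] by linarith
qed

lemma twin_le:
  assumes sg: "simple_graph V E" and conn: "connected_graph V E"
    and tw: "twins V E u v" and z: "z \<in> V" "z \<noteq> u" "z \<noteq> v"
  shows "dist E z u \<le> dist E z v"
proof -
  have s: "\<forall>a b. E a b \<longrightarrow> E b a" and irr: "\<forall>a. \<not> E a a" using sg unfolding simple_graph_def by auto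
  have vV: "v \<in> V" and nb: "nbhd E u - {v} = nbhd E v - {u}" using tw unfolding twins_def by auto
  obtain m where "walk_len E z v m" using conn z vV unfolding connected_graph_def by blast
  hence w: "walk_len E z v (dist E z v)" by (rule dist_walk)
  have "dist E z v \<noteq> 0" using dist0[OF w] z by auto
  then obtain n where n: "dist E z v = Suc n" by (cases "dist E z v") auto
  obtain t where t: "walk_len E z t n" "E t v" using walk_last[OF s] w n by metis
  show ?thesis
  proof (cases "t = u")
    case True
    thus ?thesis using dist_le[OF t(1)] n by simp
  next
    case False
    have "t \<noteq> v" using t(2) irr by auto
    hence "t \<in> nbhd E v - {u}" using t(2) s False unfolding nbhd_def by auto
    hence "E u t" using nb unfolding nbhd_def by auto
    hence "walk_len E z u (Suc n)" using walk_snoc[OF t(1)] s by blast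
    thus ?thesis using dist_le n by metis
  qed
qed

lemma twins_sym: "twins V E u v \<Longrightarrow> twins V E v u"
  unfolding twins_def by auto

lemma twin_eq:
  assumes sg: "simple_graph V E" and conn: "connected_graph V E"
    and tw: "twins V E u v" and z: "z \<in> V" "z \<noteq> u" "z \<noteq> v"
  shows "dist E z u = dist E z v"
  using twin_le[OF sg conn tw z] twin_le[OF sg conn twins_sym[OF tw] z(1,3,2)] by linarith

lemma hard_case:
  assumes sg: "simple_graph V E" and conn: "connected_graph V E" and c4: "card V \<ge> 4"
    and wtr: "wtr_set V E {u, v}" and tw: "twins V E u v"
  shows False
proof -
  have s: "\<forall>a b. E a b \<longrightarrow> E b a" and irr: "\<forall>a. \<not> E a a" and fin: "finite V"
    and inV: "\<forall>x y. E x y \<longrightarrow> x \<in> V \<and> y \<in> V"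
    using sg unfolding simple_graph_def by auto
  have uV: "u \<in> V" and vV: "v \<in> V" and uv: "u \<noteq> v" and nb: "nbhd E u - {v} = nbhd E v - {u}"
    using tw unfolding twins_def by auto
  have res: "\<forall>y\<in>V. \<forall>z\<in>V. y \<noteq> z \<longrightarrow> (\<exists>x\<in>{u,v}. dist E y x \<noteq> dist E z x)"
    and wt: "\<forall>w\<in>{u,v}. \<forall>x\<in>V - {u,v}. \<exists>w'\<in>{u,v} - {w}. dist E x w' \<noteq> dist E w w'"
    using wtr unfolding wtr_set_def resolving_set_def by auto
  have wt_u: "\<And>x. x \<in> V \<Longrightarrow> x \<noteq> u \<Longrightarrow> x \<noteq> v \<Longrightarrow> dist E x v \<noteq> dist E u v"
    using wt uv by auto
  have walk: "\<And>x y. x \<in> V \<Longrightarrow> y \<in> V \<Longrightarrow> \<exists>n. walk_len E x y n"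
    using conn unfolding connected_graph_def by auto
  have twE: "\<And>z. z \<noteq> u \<Longrightarrow> z \<noteq> v \<Longrightarrow> E z v \<longleftrightarrow> E z u"
    using nb s unfolding nbhd_def by blast
  have "\<not> V \<subseteq> {u, v}"
  proof
    assume "V \<subseteq> {u, v}"
    hence "card V \<le> card {u, v}" by (rule card_mono[rotated]) auto
    also have "\<dots> \<le> 2" by (simp add: card_insert_le_m1)
    finally show False using c4 by simp
  qed
  then obtain z1 where z1: "z1 \<in> V" "z1 \<noteq> u" "z1 \<noteq> v" by blast
  have "\<exists>a. a \<in> V \<and> a \<noteq> u \<and> a \<noteq> v \<and> E a u"
  proof (rule ccontr)
    assume na: "\<not> ?thesis"
    have cl: "\<forall>p q. p \<in> V - {u,v} \<longrightarrow> E p q \<longrightarrow> q \<in> V - {u,v}"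
      using na inV twE by blast
    obtain n where "walk_len E z1 u n" using walk z1(1) uV by blast
    from walk_closed[OF this cl] z1 show False by auto
  qed
  then obtain a where a: "a \<in> V" "a \<noteq> u" "a \<noteq> v" "E a u" by blast
  have av: "E a v" using twE a by auto
  have dau: "dist E a u = 1" and dav: "dist E a v = 1" using dist1 a av by auto
  have "dist E u v \<noteq> 1" using wt_u[OF a(1-3)] dav by simp
  hence nuv: "\<not> E u v" using dist1 uv by metis
  have "walk_len E u v 2" using walk2[of E u a v] s a av by blast
  hence duv: "dist E u v = 2" using dist_le dist0 uv \<open>dist E u v \<noteq> 1\<close> by fastforce
  define S where "S = V - {u, v, a}"
  have Sprop: "\<And>c. c \<in> S \<Longrightarrow> dist E c u \<noteq> 1 \<and> dist E c u \<noteq> 2 \<and> dist E c u = dist E c v"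
  proof -
    fix c assume c: "c \<in> S"
    have cV: "c \<in> V" "c \<noteq> u" "c \<noteq> v" "c \<noteq> a" using c S_def by auto
    have eq: "dist E c u = dist E c v" using twin_eq[OF sg conn tw cV(1-3)] .
    have "\<exists>x\<in>{u,v}. dist E c x \<noteq> dist E a x" using res cV a(1) by auto
    hence "dist E c u \<noteq> 1" using eq dau dav by auto
    moreover have "dist E c u \<noteq> 2" using wt_u[OF cV(1-3)] duv eq by simp
    ultimately show "dist E c u \<noteq> 1 \<and> dist E c u \<noteq> 2 \<and> dist E c u = dist E c v" using eq by simp
  qed
  have cl: "\<forall>p q. p \<in> S \<longrightarrow> E p q \<longrightarrow> q \<in> S"
  proof (intro allI impI)
    fix p q assume p: "p \<in> S" and e: "E p q"
    have pV: "p \<noteq> u" "p \<noteq> v" using p S_def by auto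
    have q1: "q \<noteq> u" using Sprop[OF p] dist1[OF _ pV(1)] e by metis
    have q2: "q \<noteq> v" using Sprop[OF p] dist1[OF _ pV(2)] e by metis
    have q3: "q \<noteq> a"
    proof
      assume "q = a"
      hence "walk_len E p u 2" using walk2[of E p a u] e a by blast
      hence "dist E p u \<le> 2" "dist E p u \<noteq> 0" using dist_le dist0 pV by auto
      thus False using Sprop[OF p] by linarith
    qed
    show "q \<in> S" using q1 q2 q3 inV e S_def by auto
  qed
  have "\<not> V \<subseteq> {u, v, a}"
  proof
    assume "V \<subseteq> {u, v, a}"
    hence "card V \<le> card {u, v, a}" by (rule card_mono[rotated]) auto
    also have "\<dots> \<le> 3" by (simp add: card_insert_le_m1)
    finally show False using c4 by simp
  qed
  then obtain b where b: "b \<in> S" using S_def by blast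
  obtain n where "walk_len E b u n" using walk b uV S_def by blast
  from walk_closed[OF this cl b] show False using S_def by auto
qed

lemma no_twin:
  assumes sg: "simple_graph V E" and conn: "connected_graph V E" and c4: "card V \<ge> 4"
    and wtr: "wtr_set V E {u, v}" and uv: "u \<noteq> v" and tw: "twins V E x y" and xW: "x \<in> {u, v}"
  shows False
proof (cases "y \<in> {u, v}")
  case True
  have "x \<noteq> y" using tw unfolding twins_def by auto
  hence "{x, y} = {u, v}" using True xW by auto
  thus False using hard_case[OF sg conn c4 _ tw] wtr by simp
next
  case False
  have s: "\<forall>a b. E a b \<longrightarrow> E b a" using sg unfolding simple_graph_def by auto
  obtain w where w: "{u, v} = {x, w}" "w \<noteq> x" using xW uv by auto
  have wy: "w \<noteq> y" using False w by auto
  have yV: "y \<in> V" and xV: "x \<in> V" using tw unfolding twins_def by auto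
  have wV: "w \<in> V" using wtr w unfolding wtr_set_def resolving_set_def by auto
  have "\<exists>w'\<in>{x,w} - {x}. dist E y w' \<noteq> dist E x w'"
    using wtr w False yV xW unfolding wtr_set_def by auto
  hence ne: "dist E y w \<noteq> dist E x w" by auto
  have walk: "\<And>x y. x \<in> V \<Longrightarrow> y \<in> V \<Longrightarrow> \<exists>n. walk_len E x y n"
    using conn unfolding connected_graph_def by auto
  have "dist E w x = dist E w y" using twin_eq[OF sg conn tw wV] w(2) wy by auto
  thus False using ne dist_sym[OF s walk[OF xV wV]] dist_sym[OF s walk[OF yV wV]] by simp
qed

theorem proposition4:
  fixes V :: "'a set" and E :: "'a \<Rightarrow> 'a \<Rightarrow> bool" and u v :: 'a
  assumes "simple_graph V E"
    and "connected_graph V E"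
    and "card V \<ge> 4"
    and "dim_wt V E = 2"
    and "wt_metric_basis V E {u, v}"
  shows "\<not> twins V E u v \<and> (\<forall>x\<in>V. \<not> is_twin V E x)"
proof -
  have wtr: "wtr_set V E {u, v}" and c: "card {u, v} = 2" using assms(4,5) unfolding wt_metric_basis_def by auto
  have uv: "u \<noteq> v" using c by auto
  have s: "\<forall>a b. E a b \<longrightarrow> E b a" and walk: "\<And>x y. x \<in> V \<Longrightarrow> y \<in> V \<Longrightarrow> \<exists>n. walk_len E x y n"
    using assms(1,2) unfolding simple_graph_def connected_graph_def by auto
  have nt: "\<not> twins V E x y" for x y
  proof
    assume tw: "twins V E x y"
    have xV: "x \<in> V" "y \<in> V" "x \<noteq> y" using tw unfolding twins_def by auto
    have "\<exists>w\<in>{u,v}. dist E x w \<noteq> dist E y w"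
      using wtr xV unfolding wtr_set_def resolving_set_def by auto
    then obtain w where w: "w \<in> {u,v}" "dist E x w \<noteq> dist E y w" by blast
    have wV: "w \<in> V" using wtr w unfolding wtr_set_def resolving_set_def by auto
    have "w = x \<or> w = y"
    proof (rule ccontr)
      assume "\<not> ?thesis"
      hence "dist E w x = dist E w y" using twin_eq[OF assms(1,2) tw wV] by auto
      thus False using w dist_sym[OF s walk[OF xV(1) wV]] dist_sym[OF s walk[OF xV(2) wV]] by simp
    qed
    thus False
      using no_twin[OF assms(1-3) wtr uv tw] no_twin[OF assms(1-3) wtr uv twins_sym[OF tw]] w(1) by auto
  qed
  thus ?thesis unfolding is_twin_def by auto
qed

end
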